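(* For every constant $\beta>0$ and every sequence $x_{1:n}\in\mathcal X^n$ ($n\ge1$), $$R^\beta_S(x_{1:n}) \ge \mathrm{CL}_w(\mathcal A) - m\ln m + \sum_{j\in\mathcal A}\tfrac12\ln\frac{n_j}{2\pi} - \tfrac12\ln n - 0.45\,m - 0.43 .$$
   Context: Let $\mathcal X$ be a finite base alphabet with $D=|\mathcal X|$. For $x_{1:n}\in\mathcal X^n$, let $n_i$ be the number of occurrences of $i$ in $x_{1:n}$, $\mathcal A=\{x_1,\dots,x_n\}$, $m=|\mathcal A|$. For $0\le t\le n$ let $\mathcal A_t=\{x_1,\dots,x_t\}$ ($\mathcal A_0=\emptyset$), $m_t=|\mathcal A_t|$, $n^t_i$ the number of occurrences of $i$ in $x_{1:t}$. New-symbol weights: for each $t$ and $i\in\mathcal X\setminus\mathcal A_t$ a number $w^t_i>0$ with $\sum_{k\in\mathcal X\setminus\mathcal A_t}w^t_k\le 1$. For constant $\beta>0$, $S^\beta(x_{t+1}=i\mid x_{1:t})=n^t_i/(t+\beta)$ if $n^t_i>0$ and $\beta w^t_i/(t+\beta)$ if $n^t_i=0$, and $S^\beta(x_{1:n})=\prod_{t=0}^{n-1}S^\beta(x_{t+1}\mid x_{1:t})$. $\mathrm{CL}_w(\mathcal A):=\sum_{t\in\{0,\dots,n-1\}:\,x_{t+1}\notin\mathcal A_t}\ln(1/w^t_{x_{t+1}})$. Redundancy: $R^\beta_S(x_{1:n}):=\ln\big(n^{-n}\prod_{j\in\mathcal A}n_j^{n_j}\big)-\ln S^\beta(x_{1:n})$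 (the log of the maximum i.i.d. likelihood over $S^\beta(x_{1:n})$). Natural logarithms. *)

theory Defs
  imports Complex_Main
begin

text \<open>A sequence x_{1:n} is a function x :: nat => 'a, with x_k for k = 1..n.
  New-symbol weights: w t i plays the role of w^t_i.\<close>

definition seen :: "(nat \<Rightarrow> 'a) \<Rightarrow> nat \<Rightarrow> 'a set" where
  "seen x t = x ` {1..t}"

definition cnt :: "(nat \<Rightarrow> 'a) \<Rightarrow> nat \<Rightarrow> 'a \<Rightarrow> nat" where
  "cnt x t i = card {k \<in> {1..t}. x k = i}"

definition S_cond :: "real \<Rightarrow> (nat \<Rightarrow> 'a \<Rightarrow> real) \<Rightarrow> (nat \<Rightarrow> 'a) \<Rightarrow> nat \<Rightarrow> 'a \<Rightarrow> real" where
  "S_cond \<beta> w x t i =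
     (if cnt x t i > 0 then real (cnt x t i) / (real t + \<beta>)
      else \<beta> * w t i / (real t + \<beta>))"

definition S_prob :: "real \<Rightarrow> (nat \<Rightarrow> 'a \<Rightarrow> real) \<Rightarrow> (nat \<Rightarrow> 'a) \<Rightarrow> nat \<Rightarrow> real" where
  "S_prob \<beta> w x n = (\<Prod>t<n. S_cond \<beta> w x t (x (t + 1)))"

definition CL :: "(nat \<Rightarrow> 'a \<Rightarrow> real) \<Rightarrow> (nat \<Rightarrow> 'a) \<Rightarrow> nat \<Rightarrow> real" where
  "CL w x n = (\<Sum>t\<in>{t. t < n \<and> x (t + 1) \<notin> seen x t}. ln (1 / w t (x (t + 1))))"

definition redundancy :: "real \<Rightarrow> (nat \<Rightarrow> 'a \<Rightarrow> real) \<Rightarrow> (nat \<Rightarrow> 'a) \<Rightarrow> nat \<Rightarrow> real" where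
  "redundancy \<beta> w x n =
     ln (real n powi (- int n) * (\<Prod>j\<in>seen x n. real (cnt x n j) ^ cnt x n j))
     - ln (S_prob \<beta> w x n)"

definition valid_weights :: "'a set \<Rightarrow> (nat \<Rightarrow> 'a \<Rightarrow> real) \<Rightarrow> (nat \<Rightarrow> 'a) \<Rightarrow> nat \<Rightarrow> bool" where
  "valid_weights X w x n \<longleftrightarrow>
     (\<forall>t\<le>n. (\<forall>i\<in>X - seen x t. w t i > 0) \<and> (\<Sum>k\<in>X - seen x t. w t k) \<le> 1)"

end

theory Submission imports Defs begin


lemma ln_lower2: assumes "(0::real) \<le> x" shows "2*x/(2+x) \<le> ln (1+x)"
proof -
  let ?f = "\<lambda>x::real. ln (1+x) - 2*x/(2+x)"
  have "?f 0 \<le> ?f x"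
  proof (rule DERIV_nonneg_imp_increasing_open[OF assms])
    fix y :: real assume y: "0 < y" "y < x"
    have "DERIV ?f y :> (1/(1+y) - 4/(2+y)^2)"
      using y by (auto intro!: derivative_eq_intros simp: field_simps power2_eq_square)
    moreover have "1/(1+y) - 4/(2+y)^2 \<ge> 0"
    proof -
      have "(2+y)*(2+y) = 4 + 4*y + y*y" by (simp add: algebra_simps)
      hence "4 + 4 * y \<le> (2 + y) * (2 + y)" using y by simp
      thus ?thesis using y by (simp add: divide_simps power2_eq_square)
    qed
    ultimately show "\<exists>d. DERIV ?f y :> d \<and> d \<ge> 0" by blast
  next
    show "continuous_on {0..x} ?f"
      by (auto intro!: continuous_intros)
  qed
  thus ?thesis by simp
qed

lemma ln_upper3: assumes "(0::real) \<le> x" shows "ln (1+x) \<le> x - x^2/2 + x^3/3"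
proof -
  let ?f = "\<lambda>x::real. x - x^2/2 + x^3/3 - ln (1+x)"
  have "?f 0 \<le> ?f x"
  proof (rule DERIV_nonneg_imp_increasing_open[OF assms])
    fix y :: real assume y: "0 < y" "y < x"
    have "DERIV ?f y :> (1 - y + y^2 - 1/(1+y))"
      using y by (auto intro!: derivative_eq_intros simp: field_simps power2_eq_square)
    moreover have "1 - y + y^2 - 1/(1+y) \<ge> 0"
    proof -
      have "(1 - y + y * y) * (1 + y) = 1 + y*y*y" by (simp add: algebra_simps)
      moreover have "y*y*y \<ge> 0" using y by simp
      ultimately have "1 \<le> (1 - y + y * y) * (1 + y)" by simp
      thus ?thesis using y by (simp add: divide_simps power2_eq_square)
    qed
    ultimately show "\<exists>d. DERIV ?f y :> d \<and> d \<ge> 0" by blast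
  next
    show "continuous_on {0..x} ?f"
      by (auto intro!: continuous_intros)
  qed
  thus ?thesis by simp
qed


definition G :: "nat \<Rightarrow> real" where "G k = (\<Sum>i\<in>{1..<k}. ln (real i))"

lemma G_Suc: "k \<ge> 1 \<Longrightarrow> G (Suc k) = G k + ln (real k)"
  unfolding G_def by (simp add: atLeastLessThanSuc add.commute)

lemma G_1[simp]: "G 1 = 0" unfolding G_def by simp
lemma G_Suc0[simp]: "G (Suc 0) = 0" unfolding G_def by simp

lemma step_bounds:
  fixes k :: real assumes k: "k \<ge> 1"
  shows "1 \<le> (k + 1/2) * (ln (k+1) - ln k)"
    and "(k + 1/2) * (ln (k+1) - ln k) \<le> 1 + 1/(2*k*(k+1))"
proof -
  define y where "y = 1/k"
  have y: "0 < y" "y \<le> 1" using k by (auto simp: y_def)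
  have ky: "k = 1/y" using k by (simp add: y_def)
  have "1 + y = (k+1)/k" using k by (simp add: y_def field_simps)
  hence L: "ln (k+1) - ln k = ln (1 + y)"
    using k by (simp add: ln_div)
  have E: "(k + 1/2) * (ln (k+1) - ln k) = (1/y + 1/2) * ln (1+y)"
    unfolding L by (simp add: y_def)
  have "2*y/(2+y) \<le> ln (1+y)" using ln_lower2 y by simp
  hence "(1/y + 1/2) * (2*y/(2+y)) \<le> (1/y + 1/2) * ln (1+y)"
    using y by (intro mult_left_mono) auto
  moreover have "(1/y + 1/2) * (2*y/(2+y)) = 1"
  proof -
    have "y*4 + y*(y*2) > 0" using y by (simp add: add_pos_nonneg)
    thus ?thesis using y by (simp add: field_simps)
  qed
  ultimately show "1 \<le> (k + 1/2) * (ln (k+1) - ln k)" unfolding E by linarith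
  have "ln (1+y) \<le> y - y^2/2 + y^3/3" using ln_upper3 y by simp
  hence "(1/y + 1/2) * ln (1+y) \<le> (1/y + 1/2) * (y - y^2/2 + y^3/3)"
    using y by (intro mult_left_mono) auto
  moreover have "(1/y + 1/2) * (y - y^2/2 + y^3/3) = 1 + y^2*(1+2*y)/12"
    using y by (simp add: field_simps power2_eq_square power3_eq_cube)
  moreover have "y^2*(1+2*y)/12 \<le> y^2/(2*(1+y))"
  proof -
    have "(1+2*y)*(1+y) \<le> 3*2"
      by (rule mult_mono) (use y in auto)
    hence "y^2*((1+2*y)*(1+y)) \<le> y^2 * 6" by (intro mult_left_mono) auto
    have "y^2*(1+2*y)/12 = y^2*((1+2*y)*(1+y)) / (12*(1+y))" using y by (simp add: field_simps)
    also have "\<dots> \<le> y^2 * 6 / (12*(1+y))" using \<open>y^2*((1+2*y)*(1+y)) \<le> y^2 * 6\<close> y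
      by (intro divide_right_mono) auto
    also have "\<dots> = y^2/(2*(1+y))" using y by (simp add: field_simps)
    finally show ?thesis .
  qed
  moreover have "1/(2*k*(k+1)) = y^2/(2*(1+y))"
    using y by (simp add: ky field_simps power2_eq_square)
  ultimately show "(k + 1/2) * (ln (k+1) - ln k) \<le> 1 + 1/(2*k*(k+1))"
    unfolding E by linarith
qed

lemma a_bounds:
  assumes "k \<ge> 1"
  shows "1/2 + 1/(2*real k) \<le> G k - (real k - 1/2) * ln (real k) + real k
       \<and> G k - (real k - 1/2) * ln (real k) + real k \<le> 1"
  using assms
proof (induction k rule: nat_induct_at_least)
  case base then show ?case by simp
next
  case (Suc k)
  have k: "real k \<ge> 1" using Suc by simp
  have eq: "G (Suc k) - (real (Suc k) - 1/2) * ln (real (Suc k)) + real (Suc k)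
      = (G k - (real k - 1/2) * ln (real k) + real k) + 1 - (real k + 1/2) * (ln (real k + 1) - ln (real k))"
    using Suc by (simp add: G_Suc algebra_simps)
  have h: "1/2 + 1/(2*real k) - 1/(2*real k*(real k+1)) = 1/2 + 1/(2*real (Suc k))"
    using k by (simp add: divide_simps) (simp add: algebra_simps)
  show ?case using Suc.IH step_bounds[OF k] unfolding eq h[symmetric] by linarith
qed



lemma seen_Suc: "seen x (Suc t) = insert (x (Suc t)) (seen x t)"
  unfolding seen_def by (simp add: atLeastAtMostSuc_conv)

lemma seen_0[simp]: "seen x 0 = {}" unfolding seen_def by simp

lemma finite_seen[simp]: "finite (seen x t)" unfolding seen_def by simp

lemma cnt_Suc: "cnt x (Suc t) i = cnt x t i + (if x (Suc t) = i then 1 else 0)"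
proof -
  have "{k \<in> {1..Suc t}. x k = i} = (if x (Suc t) = i then insert (Suc t) {k \<in> {1..t}. x k = i} else {k \<in> {1..t}. x k = i})"
    by (auto simp: atLeastAtMostSuc_conv)
  thus ?thesis unfolding cnt_def by simp
qed

lemma cnt_pos: "cnt x t i > 0 \<longleftrightarrow> i \<in> seen x t"
  unfolding cnt_def seen_def by (auto simp: card_gt_0_iff)

lemma card_new: "(\<Sum>t<N. if x (Suc t) \<notin> seen x t then 1 else 0 :: real) = real (card (seen x N))"
  by (induction N) (auto simp: seen_Suc insert_absorb)

lemma sum_cnt: "(\<Sum>j\<in>seen x N. cnt x N j) = N"
proof (induction N)
  case 0 then show ?case by simp
next
  case (Suc N)
  let ?a = "x (Suc N)"
  have "(\<Sum>j\<in>seen x (Suc N). cnt x (Suc N) j) = (\<Sum>j\<in>seen x (Suc N). cnt x N j + (if ?a = j then 1 else 0))"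
    by (simp add: cnt_Suc)
  also have "\<dots> = (\<Sum>j\<in>seen x (Suc N). cnt x N j) + 1"
    by (simp add: sum.distrib seen_Suc)
  also have "(\<Sum>j\<in>seen x (Suc N). cnt x N j) = (\<Sum>j\<in>seen x N. cnt x N j)"
  proof (cases "?a \<in> seen x N")
    case True then show ?thesis by (simp add: seen_Suc insert_absorb)
  next
    case False
    hence "cnt x N ?a = 0" using cnt_pos[of x N "x (Suc N)"] by simp
    then show ?thesis using False by (simp add: seen_Suc)
  qed
  finally show ?case using Suc by simp
qed

lemma rep_sum: "(\<Sum>t<N. if x (Suc t) \<in> seen x t then ln (real (cnt x t (x (Suc t)))) else 0)
   = (\<Sum>j\<in>seen x N. G (cnt x N j))"
proof (induction N)
  case 0 then show ?case by simp
next
  case (Suc N)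
  let ?a = "x (Suc N)"
  show ?case
  proof (cases "?a \<in> seen x N")
    case False
    hence c0: "cnt x N ?a = 0" using cnt_pos[of x N "x (Suc N)"] by simp
    have "(\<Sum>j\<in>seen x (Suc N). G (cnt x (Suc N) j)) = G (cnt x (Suc N) ?a) + (\<Sum>j\<in>seen x N. G (cnt x (Suc N) j))"
      using False by (simp add: seen_Suc)
    also have "(\<Sum>j\<in>seen x N. G (cnt x (Suc N) j)) = (\<Sum>j\<in>seen x N. G (cnt x N j))"
      using False by (intro sum.cong) (auto simp: cnt_Suc)
    also have "G (cnt x (Suc N) ?a) = 0" using c0 by (simp add: cnt_Suc)
    finally show ?thesis using Suc False by simp
  next
    case True
    have c: "cnt x N ?a \<ge> 1" using True cnt_pos[of x N "x (Suc N)"] by simp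
    have "(\<Sum>j\<in>seen x (Suc N). G (cnt x (Suc N) j)) = G (cnt x (Suc N) ?a) + (\<Sum>j\<in>seen x N - {?a}. G (cnt x (Suc N) j))"
      using True by (simp add: seen_Suc insert_absorb sum.remove)
    also have "(\<Sum>j\<in>seen x N - {?a}. G (cnt x (Suc N) j)) = (\<Sum>j\<in>seen x N - {?a}. G (cnt x N j))"
      by (intro sum.cong) (auto simp: cnt_Suc)
    also have "G (cnt x (Suc N) ?a) = G (cnt x N ?a) + ln (real (cnt x N ?a))"
      using c by (simp add: cnt_Suc G_Suc)
    finally have "(\<Sum>j\<in>seen x (Suc N). G (cnt x (Suc N) j)) = (\<Sum>j\<in>seen x N. G (cnt x N j)) + ln (real (cnt x N ?a))"
      using True by (simp add: sum.remove)
    then show ?thesis using Suc True by simp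
  qed
qed



lemma sum_ln_beta:
  assumes "1 \<le> m" "m \<le> n" "(\<beta>::real) > 0"
  shows "(\<Sum>t<n. ln (real t + \<beta>)) \<ge> real m * ln \<beta> + G n - G m"
proof -
  have split: "{..<n} = {..<m} \<union> {m..<n}" using assms by auto
  have "(\<Sum>t<n. ln (real t + \<beta>)) = (\<Sum>t<m. ln (real t + \<beta>)) + (\<Sum>t\<in>{m..<n}. ln (real t + \<beta>))"
    unfolding split by (rule sum.union_disjoint) auto
  moreover have "(\<Sum>t<m. ln (real t + \<beta>)) \<ge> (\<Sum>t<m. ln \<beta>)"
    using assms by (intro sum_mono) auto
  moreover have "(\<Sum>t\<in>{m..<n}. ln (real t + \<beta>)) \<ge> (\<Sum>t\<in>{m..<n}. ln (real t))"
    using assms by (intro sum_mono) auto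
  moreover have "G n = G m + (\<Sum>t\<in>{m..<n}. ln (real t))"
  proof -
    have "{1..<n} = {1..<m} \<union> {m..<n}" using assms by auto
    thus ?thesis unfolding G_def by (simp add: sum.union_disjoint)
  qed
  ultimately show ?thesis by simp
qed



lemma comb_lin:
  assumes "(Rd::real) = - NL + P - (Q + MB - CLv - T)"
    "P - Q \<ge> S + nr - mr"
    "Gn - Gm \<ge> NL - lnn/2 - ML + lm/2 + mr - nr - 1/2"
    "T \<ge> MB + Gn - Gm" "lm \<ge> 0"
  shows "Rd \<ge> CLv + S - lnn/2 - ML - 1/2"
  using assms by linarith

lemma fin_lin:
  assumes "(Rd::real) \<ge> CLv + S - lnn/2 - ML - 1/2" "Tg = S - mr*L2/2" "mr*L2 \<ge> 0" "mr \<ge> 1"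
  shows "Rd \<ge> CLv - ML + Tg - lnn/2 - 0.45*mr - 0.43"
proof -
  have e: "(0.45::real) = 9/20" "(0.43::real) = 43/100" by simp_all
  show ?thesis unfolding e using assms by linarith
qed

theorem theorem2:
  fixes X :: "'a set" and x :: "nat \<Rightarrow> 'a" and w :: "nat \<Rightarrow> 'a \<Rightarrow> real"
    and \<beta> :: real and n :: nat
  assumes "finite X"
    and "\<forall>k\<in>{1..n}. x k \<in> X"
    and "n \<ge> 1"
    and "\<beta> > 0"
    and "valid_weights X w x n"
  shows "redundancy \<beta> w x n \<ge>
           CL w x n - real (card (seen x n)) * ln (real (card (seen x n)))
           + (\<Sum>j\<in>seen x n. ln (real (cnt x n j) / (2 * pi)) / 2)
           - ln (real n) / 2 - 0.45 * real (card (seen x n)) - 0.43"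
proof -
  note xX = assms(2) and n1 = assms(3) and bpos = assms(4)
  define A where "A = seen x n"
  define m where "m = card A"
  define c where "c = cnt x n"
  have finA: "finite A" by (simp add: A_def)
  have m1: "m \<ge> 1"
  proof -
    have "x 1 \<in> A" using n1 by (auto simp: A_def seen_def)
    thus ?thesis using finA by (auto simp: m_def Suc_le_eq card_gt_0_iff)
  qed
  have mn: "m \<le> n" unfolding m_def A_def seen_def
    using card_image_le[of "{1..n}" x] by simp
  have cpos: "c j \<ge> 1" if "j \<in> A" for j
    using that cnt_pos[of x n j] by (simp add: A_def c_def)
  have sumc: "(\<Sum>j\<in>A. real (c j)) = real n"
    using sum_cnt[of x n] unfolding A_def c_def by (metis of_nat_sum)
  define a where "a t = x (Suc t)" for t
  have wpos: "w t (a t) > 0" if "t < n" "a t \<notin> seen x t" for t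
  proof -
    have "a t \<in> X" using xX that(1) by (auto simp: a_def)
    thus ?thesis using assms(5) that unfolding valid_weights_def by auto
  qed
  have Spos: "S_cond \<beta> w x t (a t) > 0" if "t < n" for t
  proof -
    have tb: "real t + \<beta> > 0" using bpos by simp
    show ?thesis
    proof (cases "a t \<in> seen x t")
      case True then show ?thesis using cnt_pos[of x t "a t"] tb by (simp add: S_cond_def)
    next
      case False then show ?thesis using cnt_pos[of x t "a t"] tb wpos[OF that False] bpos
        by (simp add: S_cond_def)
    qed
  qed
  have lnS_t: "ln (S_cond \<beta> w x t (a t)) =
      (if a t \<in> seen x t then ln (real (cnt x t (a t))) else 0)
      + (if a t \<notin> seen x t then 1 else 0) * ln \<beta>
      + (if a t \<notin> seen x t then ln (w t (a t)) else 0) - ln (real t + \<beta>)" if "t < n" for t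
  proof -
    have tb: "real t + \<beta> > 0" using bpos by simp
    show ?thesis
    proof (cases "a t \<in> seen x t")
      case True
      hence cp: "cnt x t (a t) > 0" using cnt_pos[of x t "a t"] by simp
      hence "S_cond \<beta> w x t (a t) = real (cnt x t (a t)) / (real t + \<beta>)"
        by (simp add: S_cond_def)
      moreover have "ln (real (cnt x t (a t)) / (real t + \<beta>)) = ln (real (cnt x t (a t))) - ln (real t + \<beta>)"
        using cp tb by (simp add: ln_div)
      ultimately show ?thesis using True by simp
    next
      case False
      hence "\<not> cnt x t (a t) > 0" using cnt_pos[of x t "a t"] by simp
      hence "S_cond \<beta> w x t (a t) = (\<beta> * w t (a t)) / (real t + \<beta>)"
        by (simp add: S_cond_def)
      moreover have "ln ((\<beta> * w t (a t)) / (real t + \<beta>)) = ln (\<beta> * w t (a t)) - ln (real t + \<beta>)"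
        using wpos[OF that False] bpos tb by (simp add: ln_div)
      moreover have "ln (\<beta> * w t (a t)) = ln \<beta> + ln (w t (a t))"
        using wpos[OF that False] bpos by (simp add: ln_mult)
      ultimately show ?thesis using False by simp
    qed
  qed
  have lnS: "ln (S_prob \<beta> w x n) = (\<Sum>j\<in>A. G (c j)) + real m * ln \<beta> - CL w x n - (\<Sum>t<n. ln (real t + \<beta>))"
  proof -
    have "ln (S_prob \<beta> w x n) = (\<Sum>t<n. ln (S_cond \<beta> w x t (a t)))"
    proof -
      have nz: "\<And>t. t \<in> {..<n} \<Longrightarrow> S_cond \<beta> w x t (x (Suc t)) \<noteq> 0"
        using Spos unfolding a_def by (metis lessThan_iff less_irrefl)
      have "ln (\<Prod>t<n. S_cond \<beta> w x t (x (Suc t))) = (\<Sum>t<n. ln (S_cond \<beta> w x t (x (Suc t))))"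
        by (rule ln_prod) (use nz in auto)
      thus ?thesis unfolding S_prob_def a_def by simp
    qed
    also have "\<dots> = (\<Sum>t<n. (if a t \<in> seen x t then ln (real (cnt x t (a t))) else 0)
      + (if a t \<notin> seen x t then 1 else 0) * ln \<beta>
      + (if a t \<notin> seen x t then ln (w t (a t)) else 0) - ln (real t + \<beta>))"
      by (intro sum.cong refl lnS_t) auto
    also have "\<dots> = (\<Sum>t<n. if a t \<in> seen x t then ln (real (cnt x t (a t))) else 0)
      + (\<Sum>t<n. if a t \<notin> seen x t then 1 else 0) * ln \<beta>
      + (\<Sum>t<n. if a t \<notin> seen x t then ln (w t (a t)) else 0) - (\<Sum>t<n. ln (real t + \<beta>))"
      by (simp add: sum.distrib sum_subtractf sum_distrib_right)
    also have "(\<Sum>t<n. if a t \<in> seen x t then ln (real (cnt x t (a t))) else 0) = (\<Sum>j\<in>A. G (c j))"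
      unfolding a_def A_def c_def using rep_sum[of x n] by simp
    also have "(\<Sum>t<n. if a t \<notin> seen x t then 1 else 0) = real m"
      unfolding a_def A_def m_def using card_new[of x n] by simp
    also have "(\<Sum>t<n. if a t \<notin> seen x t then ln (w t (a t)) else 0) = - CL w x n"
    proof -
      have "CL w x n = (\<Sum>t\<in>{t \<in> {..<n}. a t \<notin> seen x t}. ln (1 / w t (a t)))"
        unfolding CL_def a_def by (intro sum.cong) auto
      also have "\<dots> = (\<Sum>t<n. if a t \<notin> seen x t then ln (1 / w t (a t)) else 0)"
        by (rule sum.inter_filter) simp
      also have "\<dots> = (\<Sum>t<n. - (if a t \<notin> seen x t then ln (w t (a t)) else 0))"
        using wpos by (intro sum.cong refl) (auto simp: ln_div)
      finally show ?thesis by (simp add: sum_negf)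
    qed
    finally show ?thesis by simp
  qed
  have lnML: "ln (real n powi (- int n) * (\<Prod>j\<in>A. real (c j) ^ c j))
      = - real n * ln (real n) + (\<Sum>j\<in>A. real (c j) * ln (real (c j)))"
  proof -
    have np: "real n > 0" using n1 by simp
    have pp: "(\<Prod>j\<in>A. real (c j) ^ c j) > 0" using cpos by (intro prod_pos) auto
    have "ln (real n powi (- int n)) = - real n * ln (real n)"
      using np by (simp add: power_int_minus ln_inverse ln_realpow)
    moreover have "ln (\<Prod>j\<in>A. real (c j) ^ c j) = (\<Sum>j\<in>A. real (c j) * ln (real (c j)))"
      using cpos finA by (subst ln_prod) (auto simp: ln_realpow)
    moreover have "real n powi (- int n) > 0" using np by simp
    ultimately show ?thesis using pp by (simp add: ln_mult)
  qed
  have R: "redundancy \<beta> w x n = - real n * ln (real n) + (\<Sum>j\<in>A. real (c j) * ln (real (c j)))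
       - ((\<Sum>j\<in>A. G (c j)) + real m * ln \<beta> - CL w x n - (\<Sum>t<n. ln (real t + \<beta>)))"
    unfolding redundancy_def using lnML lnS by (simp add: A_def c_def)
  have per: "real (c j) * ln (real (c j)) - G (c j) \<ge> ln (real (c j)) / 2 + real (c j) - 1" if "j \<in> A" for j
    using a_bounds[OF cpos[OF that]] by (simp add: algebra_simps)
  have sper: "(\<Sum>j\<in>A. real (c j) * ln (real (c j)) - G (c j)) \<ge> (\<Sum>j\<in>A. ln (real (c j)) / 2 + real (c j) - 1)"
    using per by (rule sum_mono)
  have sper2: "(\<Sum>j\<in>A. ln (real (c j)) / 2 + real (c j) - 1) = (\<Sum>j\<in>A. ln (real (c j)) / 2) + real n - real m"
    using sumc by (simp add: sum.distrib sum_subtractf m_def)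
  have target: "(\<Sum>j\<in>A. ln (real (c j) / (2 * pi)) / 2) = (\<Sum>j\<in>A. ln (real (c j)) / 2) - real m * ln (2*pi) / 2"
  proof -
    have "(\<Sum>j\<in>A. ln (real (c j) / (2 * pi)) / 2) = (\<Sum>j\<in>A. ln (real (c j)) / 2 - ln (2*pi) / 2)"
    proof (intro sum.cong refl)
      fix j assume "j \<in> A"
      hence "real (c j) > 0" using cpos by fastforce
      thus "ln (real (c j) / (2 * pi)) / 2 = ln (real (c j)) / 2 - ln (2*pi) / 2"
        by (simp add: ln_div diff_divide_distrib)
    qed
    thus ?thesis by (simp add: sum_subtractf m_def)
  qed
  have lb: "(\<Sum>t<n. ln (real t + \<beta>)) \<ge> real m * ln \<beta> + G n - G m"
    using sum_ln_beta[OF m1 mn bpos] .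
  have an: "G n \<ge> 1/2 + real n * ln (real n) - ln (real n) / 2 - real n"
  proof -
    have "1/(2*real n) \<ge> 0" by simp
    moreover have "(real n - 1/2) * ln (real n) = real n * ln (real n) - ln (real n) / 2"
      by (simp add: algebra_simps)
    ultimately show ?thesis using a_bounds[OF n1] by linarith
  qed
  have am: "G m \<le> 1 + real m * ln (real m) - ln (real m) / 2 - real m"
  proof -
    have "(real m - 1/2) * ln (real m) = real m * ln (real m) - ln (real m) / 2"
      by (simp add: algebra_simps)
    thus ?thesis using a_bounds[OF m1] by linarith
  qed
  have mpi: "real m * ln (2*pi) \<ge> 0" using pi_ge_two by simp
  have lpi: "ln (2*pi) \<ge> 0" using pi_ge_two by simp
  have lm: "ln (real m) \<ge> 0" using m1 by simp
  have m1r: "real m \<ge> 1" using m1 by simp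
  have sumdiff: "(\<Sum>j\<in>A. real (c j) * ln (real (c j))) - (\<Sum>j\<in>A. G (c j)) = (\<Sum>j\<in>A. real (c j) * ln (real (c j)) - G (c j))"
    by (simp add: sum_subtractf)
  have "redundancy \<beta> w x n \<ge> CL w x n - real m * ln (real m) + (\<Sum>j\<in>A. ln (real (c j) / (2 * pi)) / 2)
           - ln (real n) / 2 - 0.45 * real m - 0.43"
  proof -
    have neg: "- real n * ln (real n) = - (real n * ln (real n))" by simp
    have main: "redundancy \<beta> w x n \<ge> CL w x n + (\<Sum>j\<in>A. ln (real (c j)) / 2) - ln (real n) / 2
        - real m * ln (real m) - 1/2"
    proof -
      have s1: "(\<Sum>j\<in>A. real (c j) * ln (real (c j))) - (\<Sum>j\<in>A. G (c j)) \<ge> (\<Sum>j\<in>A. ln (real (c j)) / 2) + real n - real m"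
        using sper sper2 sumdiff by linarith
      have s2: "G n - G m \<ge> real n * ln (real n) - ln (real n) / 2 - real m * ln (real m) + ln (real m) / 2 + real m - real n - 1/2"
        using an am by linarith
      show ?thesis by (rule comb_lin[OF R[unfolded neg] s1 s2 lb lm])
    qed
    show ?thesis by (rule fin_lin[OF main target mpi m1r])
  qed
  thus ?thesis by (simp add: A_def m_def c_def)
qed


end
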